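(* Let $A$ be an algebra with few automorphisms, with canonical grading $A=\bigoplus_{m\in\mathbb Z^r}A_{(m)}$, and let $A=\bigoplus_{n\in\mathbb Z^t}A_n$ be any algebra grading of $A$. Then there is a group homomorphism $\varphi:\mathbb Z^r\to\mathbb Z^t$ such that $A_n=\bigoplus_{m\in\mathbb Z^r:\ \varphi(m)=n}A_{(m)}$ for all $n\in\mathbb Z^t$.
   Context: $\Bbbk$ is a field of characteristic zero. Rational actions of a torus $(\Bbbk^\times)^r$ on an algebra $A$ by algebra automorphisms correspond bijectively to algebra gradings of $A$ by $\mathbb Z^r$ (homogeneous components being isotypic components of characters). An associative $\Bbbk$-algebra $A$ has few automorphisms if: (i) there is a finite dimensional $\mathrm{Aut}_{\rm Alg}A$-invariant subspace $V\subseteq A$ such that restriction $\mathrm{Aut}_{\rm Alg}A\to GL(V)$ is injective; (ii) the image is an algebraic subgroup of $GL(V)$; (iii) the action of $\mathrm{Aut}_{\rm Alg}A$ on $A$ is rational (union of finite dimensional rational submodules); (iv) the identity component $(\mathrm{Aut}_{\rm Alg}A)_0$ is isomorphic to a torus $(\Bbbk^\times)^r$. Fixing such an isomorphism, the canonical grading $A=\bigoplus_{m\in\mathbb Z^r}A_{(m)}$ is the grading induced by the rational action of $(\mathrm{Aut}_{\rm Alg}A)_0$. *)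

theory Defs
  imports Complex_Main "HOL-Library.FuncSet"
begin

definition is_algebra :: "('k::field_char_0 \<Rightarrow> 'a::ring_1 \<Rightarrow> 'a) \<Rightarrow> bool" where
  "is_algebra smult \<longleftrightarrow> vector_space smult \<and>
     (\<forall>c x y. smult c (x * y) = smult c x * y \<and> smult c (x * y) = x * smult c y)"

definition alg_aut :: "('k::field_char_0 \<Rightarrow> 'a::ring_1 \<Rightarrow> 'a) \<Rightarrow> ('a \<Rightarrow> 'a) \<Rightarrow> bool" where
  "alg_aut smult f \<longleftrightarrow> bij f \<and> Vector_Spaces.linear smult smult f \<and>
     (\<forall>x y. f (x * y) = f x * f y) \<and> f 1 = 1"

definition Aut :: "('k::field_char_0 \<Rightarrow> 'a::ring_1 \<Rightarrow> 'a) \<Rightarrow> ('a \<Rightarrow> 'a) set" where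
  "Aut smult = {f. alg_aut smult f}"

definition fin_dim_subspace :: "('k::field_char_0 \<Rightarrow> 'a::ring_1 \<Rightarrow> 'a) \<Rightarrow> 'a set \<Rightarrow> bool" where
  "fin_dim_subspace smult W \<longleftrightarrow> module.subspace smult W \<and> (\<exists>B. finite B \<and> W = module.span smult B)"

text \<open>Linear functionals on the algebra (every linear functional on a subspace extends to one).\<close>
definition lin_functional :: "('k::field_char_0 \<Rightarrow> 'a::ring_1 \<Rightarrow> 'a) \<Rightarrow> ('a \<Rightarrow> 'k) \<Rightarrow> bool" where
  "lin_functional smult lam \<longleftrightarrow> Vector_Spaces.linear smult (*) lam"

definition GLV :: "('k::field_char_0 \<Rightarrow> 'a::ring_1 \<Rightarrow> 'a) \<Rightarrow> 'a set \<Rightarrow> ('a \<Rightarrow> 'a) set" where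
  "GLV smult V = {g. bij_betw g V V \<and> (\<forall>x\<in>V. \<forall>y\<in>V. g (x + y) = g x + g y)
      \<and> (\<forall>c. \<forall>x\<in>V. g (smult c x) = smult c (g x)) \<and> (\<forall>x. x \<notin> V \<longrightarrow> g x = undefined)}"

text \<open>Polynomial functions on End(V): the algebra generated by the matrix coefficients
  g \<mapsto> lam (g v).\<close>
inductive polyV :: "('k::field_char_0 \<Rightarrow> 'a::ring_1 \<Rightarrow> 'a) \<Rightarrow> 'a set \<Rightarrow> (('a \<Rightarrow> 'a) \<Rightarrow> 'k) \<Rightarrow> bool"
  for smult V where
  pconst: "polyV smult V (\<lambda>g. c)"
| pcoeff: "v \<in> V \<Longrightarrow> lin_functional smult lam \<Longrightarrow> polyV smult V (\<lambda>g. lam (g v))"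
| padd: "polyV smult V p \<Longrightarrow> polyV smult V q \<Longrightarrow> polyV smult V (\<lambda>g. p g + q g)"
| pmult: "polyV smult V p \<Longrightarrow> polyV smult V q \<Longrightarrow> polyV smult V (\<lambda>g. p g * q g)"

text \<open>Regular functions on GL(V): the algebra generated by the matrix coefficients of g
  and of g inverse (coordinate ring of GL(V)).\<close>
inductive regV :: "('k::field_char_0 \<Rightarrow> 'a::ring_1 \<Rightarrow> 'a) \<Rightarrow> 'a set \<Rightarrow> (('a \<Rightarrow> 'a) \<Rightarrow> 'k) \<Rightarrow> bool"
  for smult V where
  rconst: "regV smult V (\<lambda>g. c)"
| rcoeff: "v \<in> V \<Longrightarrow> lin_functional smult lam \<Longrightarrow> regV smult V (\<lambda>g. lam (g v))"
| rcoeff_inv: "v \<in> V \<Longrightarrow> lin_functional smult lam \<Longrightarrow> regV smult V (\<lambda>g. lam (inv_into V g v))"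
| radd: "regV smult V p \<Longrightarrow> regV smult V q \<Longrightarrow> regV smult V (\<lambda>g. p g + q g)"
| rmult: "regV smult V p \<Longrightarrow> regV smult V q \<Longrightarrow> regV smult V (\<lambda>g. p g * q g)"

definition zariski_closed :: "('k::field_char_0 \<Rightarrow> 'a::ring_1 \<Rightarrow> 'a) \<Rightarrow> 'a set \<Rightarrow> ('a \<Rightarrow> 'a) set \<Rightarrow> bool" where
  "zariski_closed smult V C \<longleftrightarrow>
     (\<exists>P. (\<forall>p\<in>P. polyV smult V p) \<and> C = {g \<in> GLV smult V. \<forall>p\<in>P. p g = (0::'k)})"

definition zariski_connected :: "('k::field_char_0 \<Rightarrow> 'a::ring_1 \<Rightarrow> 'a) \<Rightarrow> 'a set \<Rightarrow> ('a \<Rightarrow> 'a) set \<Rightarrow> bool" where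
  "zariski_connected smult V S \<longleftrightarrow>
     \<not> (\<exists>C1 C2. zariski_closed smult V C1 \<and> zariski_closed smult V C2 \<and>
          S \<subseteq> C1 \<union> C2 \<and> S \<inter> C1 \<noteq> {} \<and> S \<inter> C2 \<noteq> {} \<and> S \<inter> C1 \<inter> C2 = {})"

definition AutV :: "('k::field_char_0 \<Rightarrow> 'a::ring_1 \<Rightarrow> 'a) \<Rightarrow> 'a set \<Rightarrow> ('a \<Rightarrow> 'a) set" where
  "AutV smult V = (\<lambda>f. restrict f V) ` Aut smult"

text \<open>Identity component (connected component of the identity, Zariski topology) of the image.\<close>
definition AutV0 :: "('k::field_char_0 \<Rightarrow> 'a::ring_1 \<Rightarrow> 'a) \<Rightarrow> 'a set \<Rightarrow> ('a \<Rightarrow> 'a) set" where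
  "AutV0 smult V = \<Union>{S. S \<subseteq> AutV smult V \<and> restrict id V \<in> S \<and> zariski_connected smult V S}"

definition Aut0 :: "('k::field_char_0 \<Rightarrow> 'a::ring_1 \<Rightarrow> 'a) \<Rightarrow> 'a set \<Rightarrow> ('a \<Rightarrow> 'a) set" where
  "Aut0 smult V = {f \<in> Aut smult. restrict f V \<in> AutV0 smult V}"

definition few_aut_V :: "('k::field_char_0 \<Rightarrow> 'a::ring_1 \<Rightarrow> 'a) \<Rightarrow> 'a set \<Rightarrow> bool" where
  "few_aut_V smult V \<longleftrightarrow>
     \<comment> \<open>(i)\<close>
     fin_dim_subspace smult V \<and> (\<forall>f\<in>Aut smult. f ` V \<subseteq> V) \<and>
     inj_on (\<lambda>f. restrict f V) (Aut smult) \<and>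
     \<comment> \<open>(ii): the image is an algebraic subgroup (it is a subgroup; closedness)\<close>
     zariski_closed smult V (AutV smult V) \<and>
     \<comment> \<open>(iii): A is a union of finite-dimensional rational submodules\<close>
     (\<forall>a. \<exists>W. a \<in> W \<and> fin_dim_subspace smult W \<and> (\<forall>f\<in>Aut smult. f ` W \<subseteq> W) \<and>
        (\<forall>w\<in>W. \<forall>mu. lin_functional smult mu \<longrightarrow>
           (\<exists>q. regV smult V q \<and> (\<forall>f\<in>Aut smult. mu (f w) = q (restrict f V)))))"

text \<open>Z^r encoded as integer sequences vanishing from index r on.\<close>
definition Zvec :: "nat \<Rightarrow> (nat \<Rightarrow> int) set" where
  "Zvec r = {m. \<forall>i\<ge>r. m i = 0}"

text \<open>The torus (k^x)^r, encoded as sequences with nonzero entries below r and 1 from r on.\<close>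
definition Tor :: "nat \<Rightarrow> (nat \<Rightarrow> 'k::field) set" where
  "Tor r = {t. (\<forall>i<r. t i \<noteq> 0) \<and> (\<forall>i\<ge>r. t i = 1)}"

definition chr :: "nat \<Rightarrow> (nat \<Rightarrow> int) \<Rightarrow> (nat \<Rightarrow> 'k::field) \<Rightarrow> 'k" where
  "chr r m t = (\<Prod>i<r. t i powi m i)"

definition laurent_fun :: "nat \<Rightarrow> ((nat \<Rightarrow> 'k::field) \<Rightarrow> 'k) \<Rightarrow> bool" where
  "laurent_fun r h \<longleftrightarrow> (\<exists>M c. finite M \<and> M \<subseteq> Zvec r \<and>
      (\<forall>t\<in>Tor r. h t = (\<Sum>m\<in>M. c m * chr r m t)))"

text \<open>tau is an isomorphism of algebraic groups from (k^x)^r onto the identity component.\<close>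
definition torus_iso :: "('k::field_char_0 \<Rightarrow> 'a::ring_1 \<Rightarrow> 'a) \<Rightarrow> 'a set \<Rightarrow> nat \<Rightarrow>
    ((nat \<Rightarrow> 'k) \<Rightarrow> ('a \<Rightarrow> 'a)) \<Rightarrow> bool" where
  "torus_iso smult V r tau \<longleftrightarrow>
     bij_betw tau (Tor r) (Aut0 smult V) \<and>
     (\<forall>s\<in>Tor r. \<forall>t\<in>Tor r. tau (\<lambda>i. s i * t i) = tau s \<circ> tau t) \<and>
     (\<forall>v\<in>V. \<forall>lam. lin_functional smult lam \<longrightarrow> laurent_fun r (\<lambda>t. lam (tau t v))) \<and>
     (\<forall>i<r. \<exists>q. regV smult V q \<and> (\<forall>t\<in>Tor r. t i = q (restrict (tau t) V)))"

definition canon_comp :: "('k::field_char_0 \<Rightarrow> 'a::ring_1 \<Rightarrow> 'a) \<Rightarrow> nat \<Rightarrow>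
    ((nat \<Rightarrow> 'k) \<Rightarrow> ('a \<Rightarrow> 'a)) \<Rightarrow> (nat \<Rightarrow> int) \<Rightarrow> 'a set" where
  "canon_comp smult r tau m = {a. \<forall>t\<in>Tor r. tau t a = smult (chr r m t) a}"

definition is_direct_sum :: "('k::field_char_0 \<Rightarrow> 'a::ring_1 \<Rightarrow> 'a) \<Rightarrow> 'a set \<Rightarrow>
    ('i \<Rightarrow> 'a set) \<Rightarrow> 'i set \<Rightarrow> bool" where
  "is_direct_sum smult X F I \<longleftrightarrow>
     X = module.span smult (\<Union>i\<in>I. F i) \<and>
     (\<forall>J x. finite J \<longrightarrow> J \<subseteq> I \<longrightarrow> (\<forall>i\<in>J. x i \<in> F i) \<longrightarrow> (\<Sum>i\<in>J. x i) = 0 \<longrightarrow> (\<forall>i\<in>J. x i = 0))"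

definition is_grading :: "('k::field_char_0 \<Rightarrow> 'a::ring_1 \<Rightarrow> 'a) \<Rightarrow> nat \<Rightarrow> ((nat \<Rightarrow> int) \<Rightarrow> 'a set) \<Rightarrow> bool" where
  "is_grading smult t Ag \<longleftrightarrow>
     (\<forall>n\<in>Zvec t. module.subspace smult (Ag n)) \<and>
     is_direct_sum smult UNIV Ag (Zvec t) \<and>
     (\<forall>n\<in>Zvec t. \<forall>n'\<in>Zvec t. \<forall>x\<in>Ag n. \<forall>y\<in>Ag n'. x * y \<in> Ag (\<lambda>i. n i + n' i))"

definition group_hom_Z :: "nat \<Rightarrow> nat \<Rightarrow> ((nat \<Rightarrow> int) \<Rightarrow> (nat \<Rightarrow> int)) \<Rightarrow> bool" where
  "group_hom_Z r t phi \<longleftrightarrow> phi \<in> Zvec r \<rightarrow> Zvec t \<and>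
     (\<forall>m\<in>Zvec r. \<forall>m'\<in>Zvec r. phi (\<lambda>i. m i + m' i) = (\<lambda>i. phi m i + phi m' i))"

end

theory Submission
  imports Defs "HOL-Computational_Algebra.Polynomial"
begin

definition tmul :: "(nat \<Rightarrow> 'k::field) \<Rightarrow> (nat \<Rightarrow> 'k) \<Rightarrow> nat \<Rightarrow> 'k" where
  "tmul s u = (\<lambda>i. s i * u i)"
definition tinv :: "(nat \<Rightarrow> 'k::field) \<Rightarrow> nat \<Rightarrow> 'k" where
  "tinv s = (\<lambda>i. inverse (s i))"
definition tone :: "nat \<Rightarrow> 'k::field" where
  "tone = (\<lambda>i. 1)"
definition zadd :: "(nat \<Rightarrow> int) \<Rightarrow> (nat \<Rightarrow> int) \<Rightarrow> nat \<Rightarrow> int" where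
  "zadd m m' = (\<lambda>i. m i + m' i)"
definition zneg :: "(nat \<Rightarrow> int) \<Rightarrow> nat \<Rightarrow> int" where
  "zneg m = (\<lambda>i. - m i)"

lemma Tor_mul: "s \<in> Tor r \<Longrightarrow> u \<in> Tor r \<Longrightarrow> tmul s u \<in> Tor r"
  by (auto simp: Tor_def tmul_def)
lemma Tor_inv: "s \<in> Tor r \<Longrightarrow> tinv s \<in> Tor r"
  by (auto simp: Tor_def tinv_def)
lemma Tor_one: "tone \<in> Tor r"
  by (auto simp: Tor_def tone_def)
lemma Zvec_add: "m \<in> Zvec r \<Longrightarrow> m' \<in> Zvec r \<Longrightarrow> zadd m m' \<in> Zvec r"
  by (auto simp: Zvec_def zadd_def)
lemma Zvec_neg: "m \<in> Zvec r \<Longrightarrow> zneg m \<in> Zvec r"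
  by (auto simp: Zvec_def zneg_def)

lemma tmul_inv: "s \<in> Tor r \<Longrightarrow> tmul s (tinv s) = tone"
  unfolding Tor_def tmul_def tinv_def tone_def fun_eq_iff
  by (metis (mono_tags, lifting) mem_Collect_eq not_le right_inverse inverse_1 mult_1)
lemma tmul_inv': "s \<in> Tor r \<Longrightarrow> tmul (tinv s) s = tone"
  using tmul_inv[of s r] by (simp add: tmul_def mult.commute)
lemma tmul_one: "tmul tone s = s" "tmul s tone = s"
  by (auto simp: tmul_def tone_def)
lemma tmul_comm: "tmul s u = tmul u s"
  by (auto simp: tmul_def)
lemma tmul_assoc: "tmul (tmul s u) v = tmul s (tmul u v)"
  by (auto simp: tmul_def)

lemma chr_mul: "chr r m (tmul s u) = chr r m s * chr r m u"
  by (simp add: chr_def tmul_def power_int_mult_distrib prod.distrib)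
lemma chr_add: "s \<in> Tor r \<Longrightarrow> chr r (zadd m m') s = chr r m s * chr r m' s"
  by (simp add: chr_def zadd_def Tor_def power_int_add prod.distrib)
lemma chr_nz: "s \<in> Tor r \<Longrightarrow> chr r m s \<noteq> 0"
  by (simp add: chr_def Tor_def power_int_not_zero)
lemma chr_inv: "chr r m (tinv s) = chr r (zneg m) s"
  by (simp add: chr_def tinv_def zneg_def power_int_inverse power_int_minus prod_inversef)
lemma chr_one: "chr r m tone = 1"
  by (simp add: chr_def tone_def)

lemma two_powi_inj:
  assumes "(2::'k::field_char_0) powi a = 2 powi b" shows "a = b"
proof -
  have "(2::'k) powi (a - b) = 1"
    using assms by (simp add: power_int_diff)
  moreover have "(2::'k) powi k \<noteq> 1" if "k \<noteq> 0" for k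
  proof (cases "k \<ge> 0")
    case True
    define n where "n = nat k"
    have n: "k = int n" "n > 0" using True that by (auto simp: n_def)
    have "(2::'k) powi k = of_nat (2 ^ n)" by (simp add: n)
    moreover have "(2::nat) ^ n \<noteq> 1" using n by simp
    ultimately show ?thesis
    proof (intro notI)
      assume a: "(2::'k) powi k = of_nat (2 ^ n)" "(2::nat) ^ n \<noteq> 1" "(2::'k) powi k = 1"
      then have "(of_nat (2 ^ n) :: 'k) = 1" by simp
      then have "(2::nat) ^ n = 1" by (simp only: of_nat_eq_1_iff)
      with a show False by blast
    qed
  next
    case False
    define n where "n = nat (- k)"
    have n: "k = - int n" "n > 0" using False that by (auto simp: n_def)
    have "(2::'k) powi k = inverse (of_nat (2 ^ n))" by (simp add: n power_int_minus)
    moreover have "(2::nat) ^ n \<noteq> 1" using n by simp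
    ultimately show ?thesis
    proof (intro notI)
      assume a: "(2::'k) powi k = inverse (of_nat (2 ^ n))" "(2::nat) ^ n \<noteq> 1" "(2::'k) powi k = 1"
      then have "inverse (of_nat (2 ^ n) :: 'k) = 1" by simp
      then have "(of_nat (2 ^ n) :: 'k) = 1" by (simp only: inverse_eq_1_iff)
      then have "(2::nat) ^ n = 1" by (simp only: of_nat_eq_1_iff)
      with a show False by blast
    qed
  qed
  ultimately show ?thesis by (metis eq_iff_diff_eq_0)
qed

lemma chr_distinct:
  assumes "m \<in> Zvec r" "m' \<in> Zvec r" "m \<noteq> m'"
  shows "\<exists>u\<in>Tor r. chr r m u \<noteq> (chr r m' u :: 'k::field_char_0)"
proof -
  obtain j where j: "m j \<noteq> m' j" using assms by auto
  have jr: "j < r" using j assms by (auto simp: Zvec_def) (meson not_le)?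
  define u :: "nat \<Rightarrow> 'k" where "u = (\<lambda>i. if i = j then 2 else 1)"
  have u: "u \<in> Tor r" using jr by (auto simp: u_def Tor_def)
  have cu: "chr r k u = (2::'k) powi k j" for k
  proof -
    have "chr r k u = (\<Prod>i<r. if i = j then 2 powi k j else 1)"
      unfolding chr_def u_def by (rule prod.cong) auto
    also have "\<dots> = 2 powi k j" using jr by (simp add: prod.delta)
    finally show ?thesis .
  qed
  have "chr r m u \<noteq> chr r m' u"
    unfolding cu using j two_powi_inj[of "m j" "m' j"] by auto
  then show ?thesis using u by blast
qed

lemma laurent_gen:
  fixes h :: "(nat \<Rightarrow> 'k::field) \<Rightarrow> 'k" and e :: "'i \<Rightarrow> nat \<Rightarrow> int"
  assumes "finite I" "e ` I \<subseteq> Zvec r" "\<forall>t\<in>Tor r. h t = (\<Sum>i\<in>I. c i * chr r (e i) t)"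
  shows "laurent_fun r h"
  unfolding laurent_fun_def
proof (intro exI conjI)
  show "finite (e ` I)" using assms by simp
  show "e ` I \<subseteq> Zvec r" by fact
  show "\<forall>t\<in>Tor r. h t = (\<Sum>m\<in>e ` I. (\<Sum>i\<in>{i\<in>I. e i = m}. c i) * chr r m t)"
  proof
    fix t :: "nat \<Rightarrow> 'k" assume t: "t \<in> Tor r"
    have "h t = (\<Sum>i\<in>I. c i * chr r (e i) t)" using assms t by auto
    also have "\<dots> = (\<Sum>m\<in>e ` I. \<Sum>i\<in>{i\<in>I. e i = m}. c i * chr r (e i) t)"
      by (rule sum.image_gen[OF assms(1)])
    also have "\<dots> = (\<Sum>m\<in>e ` I. (\<Sum>i\<in>{i\<in>I. e i = m}. c i) * chr r m t)"
      by (rule sum.cong) (auto simp: sum_distrib_right)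
    finally show "h t = \<dots>" .
  qed
qed

lemma laurent_cong: "laurent_fun r h \<Longrightarrow> (\<And>t. t \<in> Tor r \<Longrightarrow> h t = h' t) \<Longrightarrow> laurent_fun r h'"
  unfolding laurent_fun_def by metis

lemma laurent_const: "laurent_fun r (\<lambda>t. c)"
  by (rule laurent_gen[of "{()}" "\<lambda>_. (\<lambda>i. 0)" r _ "\<lambda>_. c"]) (auto simp: Zvec_def chr_def)

lemma laurent_chr: "m \<in> Zvec r \<Longrightarrow> laurent_fun r (chr r m)"
  by (rule laurent_gen[of "{()}" "\<lambda>_. m" r _ "\<lambda>_. 1"]) auto

lemma laurent_add:
  fixes f g :: "(nat \<Rightarrow> 'k::field) \<Rightarrow> 'k"
  assumes "laurent_fun r f" "laurent_fun r g"
  shows "laurent_fun r (\<lambda>t. f t + g t)"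
proof -
  obtain M c where M: "finite M" "M \<subseteq> Zvec r" "\<forall>t\<in>Tor r. f t = (\<Sum>m\<in>M. c m * chr r m t)"
    using assms(1) unfolding laurent_fun_def by blast
  obtain M' c' where M': "finite M'" "M' \<subseteq> Zvec r" "\<forall>t\<in>Tor r. g t = (\<Sum>m\<in>M'. c' m * chr r m t)"
    using assms(2) unfolding laurent_fun_def by blast
  show ?thesis
    by (rule laurent_gen[of "M <+> M'" "case_sum id id" r _ "case_sum c c'"])
       (use M M' in \<open>auto simp: sum.Plus\<close>)
qed

lemma laurent_mult:
  fixes f g :: "(nat \<Rightarrow> 'k::field) \<Rightarrow> 'k"
  assumes "laurent_fun r f" "laurent_fun r g"
  shows "laurent_fun r (\<lambda>t. f t * g t)"
proof -
  obtain M c where M: "finite M" "M \<subseteq> Zvec r" "\<forall>t\<in>Tor r. f t = (\<Sum>m\<in>M. c m * chr r m t)"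
    using assms(1) unfolding laurent_fun_def by blast
  obtain M' c' where M': "finite M'" "M' \<subseteq> Zvec r" "\<forall>t\<in>Tor r. g t = (\<Sum>m\<in>M'. c' m * chr r m t)"
    using assms(2) unfolding laurent_fun_def by blast
  show ?thesis
  proof (rule laurent_gen[of "M \<times> M'" "\<lambda>(m,m'). zadd m m'" r _ "\<lambda>(m,m'). c m * c' m'"])
    show "finite (M \<times> M')" using M M' by simp
    show "(\<lambda>(m,m'). zadd m m') ` (M \<times> M') \<subseteq> Zvec r" using M M' by (auto intro: Zvec_add)
    show "\<forall>t\<in>Tor r. f t * g t = (\<Sum>i\<in>M \<times> M'. (case i of (m,m') \<Rightarrow> c m * c' m') *
             chr r (case i of (m,m') \<Rightarrow> zadd m m') t)"
    proof
      fix t :: "nat \<Rightarrow> 'k" assume t: "t \<in> Tor r"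
      have "f t * g t = (\<Sum>m\<in>M. \<Sum>m'\<in>M'. (c m * chr r m t) * (c' m' * chr r m' t))"
        using M M' t by (simp add: sum_product)
      also have "\<dots> = (\<Sum>(m,m')\<in>M \<times> M'. (c m * chr r m t) * (c' m' * chr r m' t))"
        by (simp add: sum.cartesian_product)
      also have "\<dots> = (\<Sum>i\<in>M \<times> M'. (case i of (m,m') \<Rightarrow> c m * c' m') *
             chr r (case i of (m,m') \<Rightarrow> zadd m m') t)"
        by (rule sum.cong) (auto simp: chr_add[OF t] algebra_simps)
      finally show "f t * g t = \<dots>" .
    qed
  qed
qed

lemma laurent_sum:
  assumes "finite I" "\<And>i. i \<in> I \<Longrightarrow> laurent_fun r (f i)"
  shows "laurent_fun r (\<lambda>t. \<Sum>i\<in>I. f i t)"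
  using assms by (induction I rule: finite_induct) (auto intro: laurent_const laurent_add)

lemma laurent_inv:
  fixes f :: "(nat \<Rightarrow> 'k::field) \<Rightarrow> 'k"
  assumes "laurent_fun r f"
  shows "laurent_fun r (\<lambda>t. f (tinv t))"
proof -
  obtain M c where M: "finite M" "M \<subseteq> Zvec r" "\<forall>t\<in>Tor r. f t = (\<Sum>m\<in>M. c m * chr r m t)"
    using assms(1) unfolding laurent_fun_def by blast
  show ?thesis
    by (rule laurent_gen[of M zneg r _ c]) (use M in \<open>auto simp: chr_inv Tor_inv intro: Zvec_neg\<close>)
qed

lemma vs_field: "vector_space ((*) :: 'k::field \<Rightarrow> 'k \<Rightarrow> 'k)"
  by unfold_locales (auto simp: algebra_simps)

lemma (in vector_space) dedekind:
  assumes "finite M" "M \<subseteq> Zvec r"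
    and dist: "\<forall>m\<in>M. \<forall>m'\<in>M. m \<noteq> m' \<longrightarrow> (\<exists>u\<in>Tor r. chr r m (u::nat\<Rightarrow>'a) \<noteq> chr r m' u)"
  shows "(\<forall>t\<in>Tor r. (\<Sum>m\<in>M. chr r m t *s w m) = 0) \<Longrightarrow> \<forall>m\<in>M. w m = 0"
  using assms(1,3)
proof (induction M arbitrary: w rule: finite_induct)
  case empty
  then show ?case by simp
next
  case (insert m0 M)
  have rest: "\<forall>m\<in>M. w m = 0"
  proof
    fix m1 assume m1: "m1 \<in> M"
    then have "m1 \<noteq> m0" using insert by auto
    then have "\<exists>u\<in>Tor r. chr r m0 (u::nat\<Rightarrow>'a) \<noteq> chr r m1 u"
      using insert.prems(2) m1 \<open>m1 \<noteq> m0\<close>[symmetric] by (meson insertI1 insertI2)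
    then obtain u :: "nat \<Rightarrow> 'a" where u: "u \<in> Tor r" "chr r m0 u \<noteq> chr r m1 u"
      by blast
    define w' where "w' m = (chr r m u - chr r m0 u) *s w m" for m
    have "\<forall>t\<in>Tor r. (\<Sum>m\<in>M. chr r m t *s w' m) = 0"
    proof
      fix t :: "nat \<Rightarrow> 'a" assume t: "t \<in> Tor r"
      have "(\<Sum>m\<in>M. chr r m t *s w' m) = (\<Sum>m\<in>insert m0 M. chr r m t *s w' m)"
        using insert by (simp add: w'_def)
      also have "\<dots> = (\<Sum>m\<in>insert m0 M. chr r m (tmul u t) *s w m - chr r m0 u *s (chr r m t *s w m))"
        by (rule sum.cong) (simp_all add: w'_def chr_mul scale_left_diff_distrib algebra_simps)
      also have "\<dots> = (\<Sum>m\<in>insert m0 M. chr r m (tmul u t) *s w m) -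
                       chr r m0 u *s (\<Sum>m\<in>insert m0 M. chr r m t *s w m)"
        by (simp only: scale_sum_right sum_subtractf)
      also have "\<dots> = 0"
      proof -
        have "(\<Sum>m\<in>insert m0 M. chr r m (tmul u t) *s w m) = 0"
          using insert.prems(1) Tor_mul[OF u(1) t] by blast
        moreover have "(\<Sum>m\<in>insert m0 M. chr r m t *s w m) = 0"
          using insert.prems(1) t by blast
        ultimately show ?thesis by simp
      qed
      finally show "(\<Sum>m\<in>M. chr r m t *s w' m) = 0" .
    qed
    then have "\<forall>m\<in>M. w' m = 0" using insert.IH insert.prems(2) by blast
    then have "w' m1 = 0" using m1 by blast
    then show "w m1 = 0" using u by (simp add: w'_def)
  qed
  have "(\<Sum>m\<in>insert m0 M. chr r m tone *s w m) = 0"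
    using insert.prems(1) Tor_one[of r] by blast
  then have "chr r m0 tone *s w m0 = 0"
    using rest insert.hyps by simp
  then show ?case using rest by (simp add: chr_one)
qed

definition vlaur :: "('k::field \<Rightarrow> 'b \<Rightarrow> 'b) \<Rightarrow> nat \<Rightarrow> ((nat \<Rightarrow> 'k) \<Rightarrow> 'b::ab_group_add) \<Rightarrow> bool" where
  "vlaur sc r F \<longleftrightarrow> (\<exists>M w. finite M \<and> M \<subseteq> Zvec r \<and> (\<forall>s\<in>Tor r. F s = (\<Sum>m\<in>M. sc (chr r m s) (w m))))"

context vector_space begin

lemma vlaur_gen:
  fixes F :: "(nat \<Rightarrow> 'a) \<Rightarrow> 'b" and e :: "'i \<Rightarrow> nat \<Rightarrow> int"
  assumes "finite I" "e ` I \<subseteq> Zvec r" "\<forall>s\<in>Tor r. F s = (\<Sum>i\<in>I. chr r (e i) s *s w i)"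
  shows "vlaur scale r F"
  unfolding vlaur_def
proof (intro exI conjI)
  show "finite (e ` I)" using assms by simp
  show "e ` I \<subseteq> Zvec r" by fact
  show "\<forall>s\<in>Tor r. F s = (\<Sum>m\<in>e ` I. chr r m s *s (\<Sum>i\<in>{i\<in>I. e i = m}. w i))"
  proof
    fix s :: "nat \<Rightarrow> 'a" assume s: "s \<in> Tor r"
    have "F s = (\<Sum>i\<in>I. chr r (e i) s *s w i)" using assms s by auto
    also have "\<dots> = (\<Sum>m\<in>e ` I. \<Sum>i\<in>{i\<in>I. e i = m}. chr r (e i) s *s w i)"
      by (rule sum.image_gen[OF assms(1)])
    also have "\<dots> = (\<Sum>m\<in>e ` I. chr r m s *s (\<Sum>i\<in>{i\<in>I. e i = m}. w i))"
      by (rule sum.cong) (auto simp: scale_sum_right)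
    finally show "F s = \<dots>" .
  qed
qed

lemma vlaur_zero: "vlaur scale r (\<lambda>s. 0)"
  unfolding vlaur_def by (rule exI[of _ "{}"]) auto

lemma vlaur_add:
  assumes "vlaur scale r F" "vlaur scale r G"
  shows "vlaur scale r (\<lambda>s. F s + G s)"
proof -
  obtain M w where M: "finite M" "M \<subseteq> Zvec r" "\<forall>s\<in>Tor r. F s = (\<Sum>m\<in>M. chr r m s *s w m)"
    using assms(1) unfolding vlaur_def by blast
  obtain M' w' where M': "finite M'" "M' \<subseteq> Zvec r" "\<forall>s\<in>Tor r. G s = (\<Sum>m\<in>M'. chr r m s *s w' m)"
    using assms(2) unfolding vlaur_def by blast
  show ?thesis
    by (rule vlaur_gen[of "M <+> M'" "case_sum id id" r _ "case_sum w w'"])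
       (use M M' in \<open>auto simp: sum.Plus\<close>)
qed

lemma vlaur_sum:
  assumes "finite I" "\<And>i. i \<in> I \<Longrightarrow> vlaur scale r (F i)"
  shows "vlaur scale r (\<lambda>s. \<Sum>i\<in>I. F i s)"
  using assms by (induction I rule: finite_induct) (auto intro: vlaur_zero vlaur_add)

lemma vlaur_scale:
  assumes "laurent_fun r h"
  shows "vlaur scale r (\<lambda>s. h s *s b)"
proof -
  obtain M c where M: "finite M" "M \<subseteq> Zvec r" "\<forall>s\<in>Tor r. h s = (\<Sum>m\<in>M. c m * chr r m s)"
    using assms unfolding laurent_fun_def by blast
  show ?thesis unfolding vlaur_def
  proof (intro exI conjI)
    show "\<forall>s\<in>Tor r. h s *s b = (\<Sum>m\<in>M. chr r m s *s (c m *s b))"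
      using M by (auto simp: scale_sum_left mult.commute)
  qed (use M in auto)
qed

end

lemma laurent_regV:
  fixes G :: "(nat \<Rightarrow> 'k::field_char_0) \<Rightarrow> 'a::ring_1 \<Rightarrow> 'a" and smult :: "'k \<Rightarrow> 'a \<Rightarrow> 'a"
  assumes "regV smult V q"
    and h1: "\<And>v lam. v \<in> V \<Longrightarrow> lin_functional smult lam \<Longrightarrow> laurent_fun n (\<lambda>s. lam (G s v))"
    and h2: "\<And>v lam. v \<in> V \<Longrightarrow> lin_functional smult lam \<Longrightarrow>
              laurent_fun n (\<lambda>s. lam (inv_into V (restrict (G s) V) v))"
  shows "laurent_fun n (\<lambda>s. q (restrict (G s) V))"
  using assms(1)
proof (induction rule: regV.induct)
  case (rconst c)
  then show ?case by (rule laurent_const)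
next
  case (rcoeff v lam)
  then show ?case using h1[of v lam] by simp
next
  case (rcoeff_inv v lam)
  then show ?case using h2[of v lam] by (simp del: restrict_apply)
next
  case (radd p q)
  show ?case using radd.IH by (rule laurent_add)
next
  case (rmult p q)
  show ?case using rmult.IH by (rule laurent_mult)
qed

lemma polyV_regV: "polyV sm V p \<Longrightarrow> regV sm V p"
  by (induction rule: polyV.induct) (auto intro: regV.intros)

lemma inv_into_restrict:
  assumes "inj f" "v \<in> V" "g v \<in> V" "f (g v) = v"
  shows "inv_into V (restrict f V) v = g v"
proof (rule inv_into_f_eq)
  show "inj_on (restrict f V) V" using assms(1) by (auto simp: inj_on_def inj_def)
qed (use assms in auto)

lemma alg_aut_props:
  assumes "alg_aut sm f"
  shows "bij f" "f (x + y) = f x + f y" "f (sm c x) = sm c (f x)" "f (x * y) = f x * f y"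
    "f 1 = 1" "Vector_Spaces.linear sm sm f" "inj f"
  using assms unfolding alg_aut_def by (auto simp: bij_def Vector_Spaces.linear_iff)

lemma dist_all:
  "M \<subseteq> Zvec r \<Longrightarrow> \<forall>m\<in>M. \<forall>m'\<in>M. m \<noteq> m' \<longrightarrow> (\<exists>u\<in>Tor r. chr r m (u::nat\<Rightarrow>'k::field_char_0) \<noteq> chr r m' u)"
  using chr_distinct by blast

locale setting =
  fixes smult :: "'k::field_char_0 \<Rightarrow> 'a::ring_1 \<Rightarrow> 'a"
    and V :: "'a set" and r t :: nat
    and tau :: "(nat \<Rightarrow> 'k) \<Rightarrow> ('a \<Rightarrow> 'a)"
    and Ag :: "(nat \<Rightarrow> int) \<Rightarrow> 'a set"
  assumes alg: "is_algebra smult"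
    and few: "few_aut_V smult V"
    and tor: "torus_iso smult V r tau"
    and gr: "is_grading smult t Ag"
begin

sublocale A: vector_space smult using alg unfolding is_algebra_def by blast

lemma smult_mult: "smult c (x * y) = smult c x * y" "smult c (x * y) = x * smult c y"
  using alg unfolding is_algebra_def by metis+

lemma dedekindA:
  assumes "finite M" "M \<subseteq> Zvec n" "\<forall>s\<in>Tor n. (\<Sum>m\<in>M. smult (chr n m s) (w m)) = 0" "m \<in> M"
  shows "w m = 0"
  using A.dedekind[OF assms(1,2) dist_all[OF assms(2)]] assms(3,4) by blast

lemma Aut_props:
  assumes "f \<in> Aut smult"
  shows "bij f" "f (x + y) = f x + f y" "f (smult c x) = smult c (f x)" "f (x * y) = f x * f y"
    "f 1 = 1" "Vector_Spaces.linear smult smult f" "inj f" "f 0 = 0"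
    "f (sum g S) = (\<Sum>i\<in>S. f (g i))"
proof -
  have al: "alg_aut smult f" using assms by (simp add: Aut_def)
  show "bij f" "f (x + y) = f x + f y" "f (smult c x) = smult c (f x)" "f (x * y) = f x * f y"
    "f 1 = 1" "Vector_Spaces.linear smult smult f" "inj f"
    using alg_aut_props[OF al] by auto
  have mh: "module_hom smult smult f"
    using alg_aut_props(6)[OF al] by (simp add: module_hom_iff_linear)
  show "f 0 = 0" using module_hom.zero[OF mh] .
  show "f (sum g S) = (\<Sum>i\<in>S. f (g i))" using module_hom.sum[OF mh] .
qed

lemma V_inv: "f \<in> Aut smult \<Longrightarrow> x \<in> V \<Longrightarrow> f x \<in> V"
  using few unfolding few_aut_V_def by blast

lemma tau_Aut: "s \<in> Tor r \<Longrightarrow> tau s \<in> Aut smult"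
  using tor unfolding torus_iso_def bij_betw_def Aut0_def by blast

lemma tau_mul: "s \<in> Tor r \<Longrightarrow> u \<in> Tor r \<Longrightarrow> tau (tmul s u) = tau s \<circ> tau u"
  using tor unfolding torus_iso_def tmul_def by blast

lemma tau_one: "tau tone = id"
proof
  fix x
  have "tau tone = tau tone \<circ> tau tone" using tau_mul[OF Tor_one Tor_one] by (simp add: tmul_one)
  then have "tau tone (tau tone x) = tau tone x" by (metis comp_apply)
  then show "tau tone x = id x" using Aut_props(7)[OF tau_Aut[OF Tor_one]] by (simp add: inj_eq)
qed

lemma tau_inv: "s \<in> Tor r \<Longrightarrow> tau s (tau (tinv s) x) = x" "s \<in> Tor r \<Longrightarrow> tau (tinv s) (tau s x) = x"
proof -
  assume s: "s \<in> Tor r"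
  show "tau s (tau (tinv s) x) = x"
    using tau_mul[OF s Tor_inv[OF s]] tmul_inv[OF s] tau_one by (metis comp_apply id_apply)
  show "tau (tinv s) (tau s x) = x"
    using tau_mul[OF Tor_inv[OF s] s] tmul_inv'[OF s] tau_one by (metis comp_apply id_apply)
qed

lemma tau_regV: "regV smult V q \<Longrightarrow> laurent_fun r (\<lambda>s. q (restrict (tau s) V))"
proof (rule laurent_regV)
  fix v lam assume v: "v \<in> V" and lam: "lin_functional smult lam"
  show "laurent_fun r (\<lambda>s. lam (tau s v))" using tor v lam unfolding torus_iso_def by blast
  then have "laurent_fun r (\<lambda>s. lam (tau (tinv s) v))" by (rule laurent_inv)
  then show "laurent_fun r (\<lambda>s. lam (inv_into V (restrict (tau s) V) v))"
  proof (rule laurent_cong)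
    fix s :: "nat \<Rightarrow> 'k" assume s: "s \<in> Tor r"
    have "inv_into V (restrict (tau s) V) v = tau (tinv s) v"
      by (rule inv_into_restrict[where g="tau (tinv s)", OF Aut_props(7)[OF tau_Aut[OF s]] v
            V_inv[OF tau_Aut[OF Tor_inv[OF s]] v] tau_inv(1)[OF s]])
    then show "lam (tau (tinv s) v) = lam (inv_into V (restrict (tau s) V) v)" by simp
  qed
qed

lemma canon_subspace: "A.subspace (canon_comp smult r tau m)"
proof (rule A.subspaceI)
  show "0 \<in> canon_comp smult r tau m" using Aut_props(8)[OF tau_Aut] by (auto simp: canon_comp_def)
next
  fix x y assume "x \<in> canon_comp smult r tau m" "y \<in> canon_comp smult r tau m"
  then show "x + y \<in> canon_comp smult r tau m"
    by (auto simp: canon_comp_def Aut_props(2)[OF tau_Aut] A.scale_right_distrib)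
next
  fix c x assume "x \<in> canon_comp smult r tau m"
  then show "smult c x \<in> canon_comp smult r tau m"
    by (auto simp: canon_comp_def Aut_props(3)[OF tau_Aut] mult.commute)
qed

lemma canon_indep:
  assumes "finite J" "J \<subseteq> Zvec r" "\<forall>i\<in>J. x i \<in> canon_comp smult r tau i" "(\<Sum>i\<in>J. x i) = 0"
  shows "\<forall>i\<in>J. x i = 0"
proof
  fix i assume i: "i \<in> J"
  show "x i = 0"
  proof (rule dedekindA[OF assms(1,2) _ i])
    show "\<forall>s\<in>Tor r. (\<Sum>m\<in>J. smult (chr r m s) (x m)) = 0"
    proof
      fix s :: "nat \<Rightarrow> 'k" assume s: "s \<in> Tor r"
      have "(\<Sum>m\<in>J. smult (chr r m s) (x m)) = (\<Sum>m\<in>J. tau s (x m))"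
        using assms(3) s by (auto simp: canon_comp_def)
      also have "\<dots> = tau s (\<Sum>m\<in>J. x m)" using Aut_props(9)[OF tau_Aut[OF s], where g=x and S=J] by simp
      also have "\<dots> = 0" using assms(4) Aut_props(8)[OF tau_Aut[OF s]] by simp
      finally show "(\<Sum>m\<in>J. smult (chr r m s) (x m)) = 0" .
    qed
  qed
qed

lemma coord_exp:
  assumes "W = A.span B" "finite B"
  obtains B0 coord where "finite B0" "\<And>b. b \<in> B0 \<Longrightarrow> lin_functional smult (coord b)"
    "\<And>x. x \<in> W \<Longrightarrow> x = (\<Sum>b\<in>B0. smult (coord b x) b)"
proof -
  obtain B0 where B0: "B0 \<subseteq> B" "A.independent B0" "B \<subseteq> A.span B0"
    using A.maximal_independent_subset[of B] by blast
  have fin: "finite B0" using B0(1) assms(2) finite_subset by blast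
  have WB0: "W = A.span B0"
    using assms(1) B0 A.span_mono[OF B0(1)] A.span_minimal[OF B0(3)] by blast
  define E where "E = A.extend_basis B0"
  have E: "A.independent E" "A.span E = UNIV" "B0 \<subseteq> E"
    unfolding E_def using B0(2) A.independent_extend_basis A.span_extend_basis A.extend_basis_superset
    by auto
  define coord where "coord b x = A.representation E x b" for b x
  have lin: "lin_functional smult (coord b)" for b
    unfolding lin_functional_def coord_def using A.linear_representation[OF E(1,2)] .
  have rep: "A.representation E x = A.representation B0 x" if x: "x \<in> A.span B0" for x
  proof (rule A.representation_eqI[OF E(1)])
    show "x \<in> A.span E" using E(2) by simp
    show "A.representation B0 x b \<noteq> 0 \<Longrightarrow> b \<in> E" for b
      using A.representation_ne_zero E(3) by blast
    show "finite {b. A.representation B0 x b \<noteq> 0}" by (rule A.finite_representation)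
    show "(\<Sum>b | A.representation B0 x b \<noteq> 0. smult (A.representation B0 x b) b) = x"
      by (rule A.sum_nonzero_representation_eq[OF B0(2) x])
  qed
  show ?thesis
  proof (rule that[of B0 coord, OF fin lin])
    fix x assume "x \<in> W"
    then have x: "x \<in> A.span B0" using WB0 by simp
    show "x = (\<Sum>b\<in>B0. smult (coord b x) b)"
      unfolding coord_def rep[OF x]
      using A.sum_representation_eq[OF B0(2) x fin order_refl] by simp
  qed
qed

lemma canon_span: "a \<in> A.span (\<Union>m\<in>Zvec r. canon_comp smult r tau m)"
proof -
  obtain W where W: "a \<in> W" "fin_dim_subspace smult W" "\<forall>f\<in>Aut smult. f ` W \<subseteq> W"
    "\<forall>w\<in>W. \<forall>mu. lin_functional smult mu \<longrightarrow>
           (\<exists>q. regV smult V q \<and> (\<forall>f\<in>Aut smult. mu (f w) = q (restrict f V)))"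
    using few unfolding few_aut_V_def by blast
  obtain B where B: "finite B" "W = A.span B"
    using W(2) unfolding fin_dim_subspace_def by blast
  obtain B0 coord where B0: "finite B0" "\<And>b. b \<in> B0 \<Longrightarrow> lin_functional smult (coord b)"
    "\<And>x. x \<in> W \<Longrightarrow> x = (\<Sum>b\<in>B0. smult (coord b x) b)"
    using coord_exp[OF B(2,1)] by blast
  have lb: "laurent_fun r (\<lambda>s. coord b (tau s a))" if b: "b \<in> B0" for b
  proof -
    obtain q where q: "regV smult V q" "\<forall>f\<in>Aut smult. coord b (f a) = q (restrict f V)"
      using W(4) W(1) B0(2)[OF b] by blast
    show ?thesis
      by (rule laurent_cong[OF tau_regV[OF q(1)]]) (use q(2) tau_Aut in auto)
  qed
  have "vlaur smult r (\<lambda>s. \<Sum>b\<in>B0. smult (coord b (tau s a)) b)"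
    by (rule A.vlaur_sum[OF B0(1)]) (rule A.vlaur_scale[OF lb])
  then obtain M w where M: "finite M" "M \<subseteq> Zvec r"
    "\<forall>s\<in>Tor r. (\<Sum>b\<in>B0. smult (coord b (tau s a)) b) = (\<Sum>m\<in>M. smult (chr r m s) (w m))"
    unfolding vlaur_def by blast
  have ta: "tau s a = (\<Sum>m\<in>M. smult (chr r m s) (w m))" if s: "s \<in> Tor r" for s
  proof -
    have "tau s a \<in> W" using W(1,3) tau_Aut[OF s] by blast
    then have "tau s a = (\<Sum>b\<in>B0. smult (coord b (tau s a)) b)" by (rule B0(3))
    then show ?thesis using M(3) s by simp
  qed
  have wc: "w m \<in> canon_comp smult r tau m" if m: "m \<in> M" for m
    unfolding canon_comp_def
  proof (intro CollectI ballI)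
    fix u :: "nat \<Rightarrow> 'k" assume u: "u \<in> Tor r"
    have "tau u (w m) - smult (chr r m u) (w m) = 0"
    proof (rule dedekindA[OF M(1,2) _ m, where w = "\<lambda>m. tau u (w m) - smult (chr r m u) (w m)"])
      show "\<forall>s\<in>Tor r. (\<Sum>m\<in>M. smult (chr r m s) (tau u (w m) - smult (chr r m u) (w m))) = 0"
      proof
        fix s :: "nat \<Rightarrow> 'k" assume s: "s \<in> Tor r"
        have "(\<Sum>m\<in>M. smult (chr r m s) (tau u (w m))) = tau u (\<Sum>m\<in>M. smult (chr r m s) (w m))"
          using Aut_props(9)[OF tau_Aut[OF u], where g="\<lambda>m. smult (chr r m s) (w m)" and S=M]
            Aut_props(3)[OF tau_Aut[OF u]] by simp
        also have "\<dots> = tau u (tau s a)" using ta[OF s] by simp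
        also have "\<dots> = tau (tmul u s) a" using tau_mul[OF u s] by simp
        also have "\<dots> = (\<Sum>m\<in>M. smult (chr r m (tmul u s)) (w m))" using ta[OF Tor_mul[OF u s]] .
        also have "\<dots> = (\<Sum>m\<in>M. smult (chr r m s) (smult (chr r m u) (w m)))"
          by (simp add: chr_mul mult.commute)
        finally show "(\<Sum>m\<in>M. smult (chr r m s) (tau u (w m) - smult (chr r m u) (w m))) = 0"
          by (simp add: A.scale_right_diff_distrib sum_subtractf)
      qed
    qed
    then show "tau u (w m) = smult (chr r m u) (w m)" by simp
  qed
  have "a = tau tone a" using tau_one by simp
  also have "\<dots> = (\<Sum>m\<in>M. w m)" using ta[OF Tor_one] by (simp add: chr_one)
  finally have "a = (\<Sum>m\<in>M. w m)" .
  moreover have "(\<Sum>m\<in>M. w m) \<in> A.span (\<Union>m\<in>Zvec r. canon_comp smult r tau m)"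
    using wc M(2) by (intro A.span_sum A.span_base) blast
  ultimately show ?thesis by simp
qed

end

definition ext :: "'i set \<Rightarrow> ('i \<Rightarrow> 'a::zero) \<Rightarrow> 'i \<Rightarrow> 'a" where
  "ext N d n = (if n \<in> N then d n else 0)"

lemma ext_sum:
  fixes h :: "'i \<Rightarrow> 'a::zero \<Rightarrow> 'b::comm_monoid_add"
  assumes "finite J" "N \<subseteq> J" "\<And>n. h n 0 = 0"
  shows "(\<Sum>n\<in>J. h n (ext N d n)) = (\<Sum>n\<in>N. h n (d n))"
proof -
  have "(\<Sum>n\<in>J. h n (ext N d n)) = (\<Sum>n\<in>J. if n \<in> N then h n (d n) else 0)"
    by (rule sum.cong) (auto simp: ext_def assms(3))
  also have "\<dots> = (\<Sum>n\<in>J \<inter> N. h n (d n))" by (simp add: sum.inter_restrict[OF assms(1)])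
  also have "J \<inter> N = N" using assms(2) by blast
  finally show ?thesis .
qed

lemma ext_sum':
  fixes d :: "'i \<Rightarrow> 'a::comm_monoid_add"
  assumes "finite J" "N \<subseteq> J"
  shows "(\<Sum>n\<in>J. ext N d n) = (\<Sum>n\<in>N. d n)"
  using ext_sum[OF assms, of "\<lambda>n x. x"] by simp

definition rep_ok :: "((nat \<Rightarrow> int) \<Rightarrow> 'a::ring_1 set) \<Rightarrow> nat \<Rightarrow> 'a \<Rightarrow> (nat \<Rightarrow> int) set \<Rightarrow> ((nat \<Rightarrow> int) \<Rightarrow> 'a) \<Rightarrow> bool" where
  "rep_ok Ag t a N d \<longleftrightarrow> finite N \<and> N \<subseteq> Zvec t \<and> (\<forall>n\<in>N. d n \<in> Ag n) \<and> a = (\<Sum>n\<in>N. d n)"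

definition gact :: "('k::field \<Rightarrow> 'a::ring_1 \<Rightarrow> 'a) \<Rightarrow> ((nat \<Rightarrow> int) \<Rightarrow> 'a set) \<Rightarrow> nat \<Rightarrow> (nat \<Rightarrow> 'k) \<Rightarrow> 'a \<Rightarrow> 'a" where
  "gact sm Ag t s a = (let p = (SOME p. rep_ok Ag t a (fst p) (snd p)) in
      \<Sum>n\<in>fst p. sm (chr t n s) (snd p n))"

lemma (in vector_space) span_union_sums:
  assumes "\<And>i. i \<in> I \<Longrightarrow> subspace (F i)" "x \<in> span (\<Union>i\<in>I. F i)"
  shows "\<exists>J d. finite J \<and> J \<subseteq> I \<and> (\<forall>i\<in>J. d i \<in> F i) \<and> x = (\<Sum>i\<in>J. d i)"
  using assms(2)
proof (induction rule: span_induct_alt)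
  case base
  show ?case by (rule exI[of _ "{}"]) auto
next
  case (step c x y)
  obtain i0 where i0: "i0 \<in> I" "x \<in> F i0" using step.hyps(1) by blast
  obtain J d where J: "finite J" "J \<subseteq> I" "\<forall>i\<in>J. d i \<in> F i" "y = (\<Sum>i\<in>J. d i)"
    using step.IH by blast
  define d' where "d' = d(i0 := c *s x + ext J d i0)"
  have "ext J d i0 \<in> F i0" using J(3) subspace_0[OF assms(1)[OF i0(1)]] by (auto simp: ext_def)
  then have d'i0: "d' i0 \<in> F i0"
    unfolding d'_def using subspace_add[OF assms(1)[OF i0(1)]] subspace_scale[OF assms(1)[OF i0(1)] i0(2)]
    by simp
  have "(\<Sum>i\<in>insert i0 J. d' i) = c *s x + y"
  proof -
    have "(\<Sum>i\<in>insert i0 J. d' i) = d' i0 + (\<Sum>i\<in>J - {i0}. d' i)"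
      using J(1) by (simp add: sum.insert_remove)
    also have "(\<Sum>i\<in>J - {i0}. d' i) = (\<Sum>i\<in>J - {i0}. d i)"
      by (rule sum.cong) (auto simp: d'_def)
    also have "y = ext J d i0 + (\<Sum>i\<in>J - {i0}. d i)"
      using J(1,4) by (cases "i0 \<in> J") (auto simp: ext_def sum.remove)
    ultimately show ?thesis by (simp add: d'_def add.assoc)
  qed
  then show ?case
    using J d'i0 i0 by (intro exI[of _ "insert i0 J"] exI[of _ d']) (auto simp: d'_def)
qed

lemma powi_sum:
  fixes x :: "'k::field"
  assumes "x \<noteq> 0"
  shows "x powi (\<Sum>i\<in>I. f i) = (\<Prod>i\<in>I. x powi f i)"
proof (cases "finite I")
  case True
  then show ?thesis by (induction I rule: finite_induct) (auto simp: power_int_add assms)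
qed simp

lemma powi_prod:
  fixes f :: "'i \<Rightarrow> 'k::field"
  shows "(\<Prod>i\<in>I. f i) powi k = (\<Prod>i\<in>I. f i powi k)"
proof (cases "finite I")
  case True
  then show ?thesis by (induction I rule: finite_induct) (auto simp: power_int_mult_distrib)
qed simp

lemma monomial_lemma:
  fixes h :: "(nat \<Rightarrow> 'k::field_char_0) \<Rightarrow> 'k"
  assumes "laurent_fun n h" "\<forall>s\<in>Tor n. \<forall>u\<in>Tor n. h (tmul s u) = h s * h u" "h tone = 1"
  shows "\<exists>phi\<in>Zvec n. \<forall>s\<in>Tor n. h s = chr n phi s"
proof -
  obtain M c where M: "finite M" "M \<subseteq> Zvec n" "\<forall>s\<in>Tor n. h s = (\<Sum>m\<in>M. c m * chr n m s)"
    using assms(1) unfolding laurent_fun_def by blast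
  have "h tone = (\<Sum>m\<in>M. c m * chr n m tone)" using M(3) Tor_one[of n] by blast
  then have "(\<Sum>m\<in>M. c m) = 1" using assms(3) by (simp add: chr_one)
  then obtain m0 where m0: "m0 \<in> M" "c m0 \<noteq> 0" by (metis (mono_tags, lifting) sum.neutral zero_neq_one)
  have "h u = chr n m0 u" if u: "u \<in> Tor n" for u
  proof -
    have "\<forall>s\<in>Tor n. (\<Sum>m\<in>M. chr n m s * (c m * chr n m u - h u * c m)) = 0"
    proof
      fix s :: "nat \<Rightarrow> 'k" assume s: "s \<in> Tor n"
      have "(\<Sum>m\<in>M. chr n m s * (c m * chr n m u - h u * c m)) =
            (\<Sum>m\<in>M. c m * chr n m (tmul u s)) - h u * (\<Sum>m\<in>M. c m * chr n m s)"
        by (simp add: sum_subtractf sum_distrib_left chr_mul algebra_simps)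
      also have "\<dots> = h (tmul u s) - h u * h s" using M(3) s u Tor_mul[OF u s] by simp
      also have "\<dots> = 0" using assms(2) u s by simp
      finally show "(\<Sum>m\<in>M. chr n m s * (c m * chr n m u - h u * c m)) = 0" .
    qed
    then have "c m0 * chr n m0 u - h u * c m0 = 0"
      using vector_space.dedekind[OF vs_field M(1,2) dist_all[OF M(2)],
          where w="\<lambda>m. c m * chr n m u - h u * c m"] m0(1) by blast
    then show ?thesis using m0(2) by (simp add: mult.commute)
  qed
  then show ?thesis using m0(1) M(2) by blast
qed

context setting begin

lemma gsub: "n \<in> Zvec t \<Longrightarrow> A.subspace (Ag n)"
  using gr unfolding is_grading_def by blast

lemma gdirect: "finite J \<Longrightarrow> J \<subseteq> Zvec t \<Longrightarrow> \<forall>i\<in>J. x i \<in> Ag i \<Longrightarrow> (\<Sum>i\<in>J. x i) = 0 \<Longrightarrow> \<forall>i\<in>J. x i = 0"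
  using gr unfolding is_grading_def is_direct_sum_def by blast

lemma gmult: "n \<in> Zvec t \<Longrightarrow> n' \<in> Zvec t \<Longrightarrow> x \<in> Ag n \<Longrightarrow> y \<in> Ag n' \<Longrightarrow> x * y \<in> Ag (zadd n n')"
  using gr unfolding is_grading_def zadd_def by blast

lemma rep_exists: "\<exists>N d. rep_ok Ag t a N d"
proof -
  have "a \<in> A.span (\<Union>n\<in>Zvec t. Ag n)"
    using gr unfolding is_grading_def is_direct_sum_def by blast
  then obtain J d where "finite J" "J \<subseteq> Zvec t" "\<forall>i\<in>J. d i \<in> Ag i" "a = (\<Sum>i\<in>J. d i)"
    using A.span_union_sums[of "Zvec t" Ag a] gsub by blast
  then show ?thesis unfolding rep_ok_def by blast
qed

lemma rep_unique:
  assumes "rep_ok Ag t a N d" "rep_ok Ag t a N' d'" "n \<in> N \<union> N'"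
  shows "ext N d n = ext N' d' n"
proof -
  have "\<forall>i\<in>N \<union> N'. ext N d i - ext N' d' i = 0"
  proof (rule gdirect)
    show "finite (N \<union> N')" "N \<union> N' \<subseteq> Zvec t" using assms unfolding rep_ok_def by auto
    show "\<forall>i\<in>N \<union> N'. ext N d i - ext N' d' i \<in> Ag i"
    proof
      fix i assume i: "i \<in> N \<union> N'"
      then have sub: "A.subspace (Ag i)" using assms unfolding rep_ok_def by (auto intro: gsub)
      have "ext N d i \<in> Ag i" "ext N' d' i \<in> Ag i"
        using assms A.subspace_0[OF sub] unfolding rep_ok_def ext_def by auto
      then show "ext N d i - ext N' d' i \<in> Ag i" using A.subspace_diff[OF sub] by blast
    qed
    show "(\<Sum>i\<in>N \<union> N'. ext N d i - ext N' d' i) = 0"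
      using assms unfolding rep_ok_def by (simp add: sum_subtractf ext_sum')
  qed
  then show ?thesis using assms(3) by simp
qed

lemma rep_some: "rep_ok Ag t a (fst (SOME p. rep_ok Ag t a (fst p) (snd p))) (snd (SOME p. rep_ok Ag t a (fst p) (snd p)))"
proof -
  obtain N d where "rep_ok Ag t a N d" using rep_exists by blast
  then have "rep_ok Ag t a (fst (N, d)) (snd (N, d))" by simp
  then show ?thesis by (rule someI)
qed

lemma g_rep:
  assumes "rep_ok Ag t a N d"
  shows "gact smult Ag t s a = (\<Sum>n\<in>N. smult (chr t n s) (d n))"
proof -
  define p where "p = (SOME p. rep_ok Ag t a (fst p) (snd p))"
  have p: "rep_ok Ag t a (fst p) (snd p)" unfolding p_def by (rule rep_some)
  have fin: "finite (N \<union> fst p)" using assms p unfolding rep_ok_def by auto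
  have "gact smult Ag t s a = (\<Sum>n\<in>fst p. smult (chr t n s) (snd p n))"
    unfolding gact_def p_def[symmetric] by simp
  also have "\<dots> = (\<Sum>n\<in>N \<union> fst p. smult (chr t n s) (ext (fst p) (snd p) n))"
    by (rule ext_sum[OF fin, symmetric]) auto
  also have "\<dots> = (\<Sum>n\<in>N \<union> fst p. smult (chr t n s) (ext N d n))"
    by (rule sum.cong) (use rep_unique[OF assms p] in auto)
  also have "\<dots> = (\<Sum>n\<in>N. smult (chr t n s) (d n))"
    by (rule ext_sum[OF fin]) auto
  finally show ?thesis .
qed

lemma g_hom: "n \<in> Zvec t \<Longrightarrow> x \<in> Ag n \<Longrightarrow> gact smult Ag t s x = smult (chr t n s) x"
  using g_rep[of x "{n}" "\<lambda>_. x"] unfolding rep_ok_def by auto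

lemma rep_add:
  assumes "rep_ok Ag t a N d" "rep_ok Ag t b N' d'"
  shows "rep_ok Ag t (a + b) (N \<union> N') (\<lambda>n. ext N d n + ext N' d' n)"
  unfolding rep_ok_def
proof (intro conjI ballI)
  show "finite (N \<union> N')" "N \<union> N' \<subseteq> Zvec t" using assms unfolding rep_ok_def by auto
  fix n assume n: "n \<in> N \<union> N'"
  then have sub: "A.subspace (Ag n)" using assms unfolding rep_ok_def by (auto intro: gsub)
  have "ext N d n \<in> Ag n" "ext N' d' n \<in> Ag n"
    using assms A.subspace_0[OF sub] unfolding rep_ok_def ext_def by auto
  then show "ext N d n + ext N' d' n \<in> Ag n" using A.subspace_add[OF sub] by blast
next
  show "a + b = (\<Sum>n\<in>N \<union> N'. ext N d n + ext N' d' n)"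
    using assms unfolding rep_ok_def by (simp add: sum.distrib ext_sum')
qed

lemma g_add: "gact smult Ag t s (a + b) = gact smult Ag t s a + gact smult Ag t s b"
proof -
  obtain N d where a: "rep_ok Ag t a N d" using rep_exists by blast
  obtain N' d' where b: "rep_ok Ag t b N' d'" using rep_exists by blast
  have fin: "finite (N \<union> N')" using a b unfolding rep_ok_def by auto
  have "gact smult Ag t s (a + b) = (\<Sum>n\<in>N \<union> N'. smult (chr t n s) (ext N d n + ext N' d' n))"
    by (rule g_rep[OF rep_add[OF a b]])
  also have "\<dots> = (\<Sum>n\<in>N \<union> N'. smult (chr t n s) (ext N d n)) + (\<Sum>n\<in>N \<union> N'. smult (chr t n s) (ext N' d' n))"
    by (simp add: A.scale_right_distrib sum.distrib)
  also have "\<dots> = gact smult Ag t s a + gact smult Ag t s b"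
    using ext_sum[OF fin, of N "\<lambda>n x. smult (chr t n s) x" d] ext_sum[OF fin, of N' "\<lambda>n x. smult (chr t n s) x" d']
    by (simp add: g_rep[OF a] g_rep[OF b])
  finally show ?thesis .
qed

lemma rep_scale:
  assumes "rep_ok Ag t a N d"
  shows "rep_ok Ag t (smult c a) N (\<lambda>n. smult c (d n))"
  using assms A.subspace_scale[OF gsub] unfolding rep_ok_def by (auto simp: A.scale_sum_right)

lemma g_scale: "gact smult Ag t s (smult c a) = smult c (gact smult Ag t s a)"
proof -
  obtain N d where a: "rep_ok Ag t a N d" using rep_exists by blast
  show ?thesis unfolding g_rep[OF a] g_rep[OF rep_scale[OF a]]
    by (simp add: A.scale_sum_right mult.commute)
qed

lemma g_zero: "gact smult Ag t s 0 = 0"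
  using g_rep[of 0 "{}"] unfolding rep_ok_def by auto

lemma g_sum: "gact smult Ag t s (\<Sum>i\<in>I. f i) = (\<Sum>i\<in>I. gact smult Ag t s (f i))"
proof (cases "finite I")
  case True
  then show ?thesis by (induction I rule: finite_induct) (auto simp: g_zero g_add)
qed (simp add: g_zero)

lemma g_mult:
  assumes s: "s \<in> Tor t"
  shows "gact smult Ag t s (a * b) = gact smult Ag t s a * gact smult Ag t s b"
proof -
  obtain N d where a: "rep_ok Ag t a N d" using rep_exists by blast
  obtain N' d' where b: "rep_ok Ag t b N' d'" using rep_exists by blast
  have ab: "a * b = (\<Sum>n\<in>N. \<Sum>n'\<in>N'. d n * d' n')"
    using a b unfolding rep_ok_def by (simp add: sum_product)
  have "gact smult Ag t s (a * b) = (\<Sum>n\<in>N. \<Sum>n'\<in>N'. gact smult Ag t s (d n * d' n'))"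
    unfolding ab g_sum ..
  also have "\<dots> = (\<Sum>n\<in>N. \<Sum>n'\<in>N'. smult (chr t n s) (d n) * smult (chr t n' s) (d' n'))"
  proof (intro sum.cong refl)
    fix n n' assume n: "n \<in> N" and n': "n' \<in> N'"
    have z: "n \<in> Zvec t" "n' \<in> Zvec t" "d n \<in> Ag n" "d' n' \<in> Ag n'"
      using a b n n' unfolding rep_ok_def by auto
    have "gact smult Ag t s (d n * d' n') = smult (chr t (zadd n n') s) (d n * d' n')"
      by (rule g_hom[OF Zvec_add[OF z(1,2)] gmult[OF z]])
    also have "\<dots> = smult (chr t n s) (smult (chr t n' s) (d n * d' n'))"
      by (simp add: chr_add[OF s])
    also have "\<dots> = smult (chr t n s) (d n * smult (chr t n' s) (d' n'))"
      by (subst smult_mult(2)) (rule refl)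
    also have "\<dots> = smult (chr t n s) (d n) * smult (chr t n' s) (d' n')"
      by (rule smult_mult(1))
    finally show "gact smult Ag t s (d n * d' n') = smult (chr t n s) (d n) * smult (chr t n' s) (d' n')" .
  qed
  also have "\<dots> = gact smult Ag t s a * gact smult Ag t s b"
    unfolding g_rep[OF a] g_rep[OF b] by (simp add: sum_product)
  finally show ?thesis .
qed

lemma g_comp:
  "gact smult Ag t s (gact smult Ag t u a) = gact smult Ag t (tmul s u) a"
proof -
  obtain N d where a: "rep_ok Ag t a N d" using rep_exists by blast
  have r: "rep_ok Ag t (gact smult Ag t u a) N (\<lambda>n. smult (chr t n u) (d n))"
    using a A.subspace_scale[OF gsub] unfolding rep_ok_def g_rep[OF a] by auto
  have "gact smult Ag t s (gact smult Ag t u a) = (\<Sum>n\<in>N. smult (chr t n s) (smult (chr t n u) (d n)))"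
    by (rule g_rep[OF r])
  then show ?thesis unfolding g_rep[OF a] by (simp add: chr_mul mult.commute)
qed

lemma g_one: "gact smult Ag t tone a = a"
proof -
  obtain N d where a: "rep_ok Ag t a N d" using rep_exists by blast
  show ?thesis unfolding g_rep[OF a] using a unfolding rep_ok_def by (simp add: chr_one)
qed

lemma g_inv: "s \<in> Tor t \<Longrightarrow> gact smult Ag t s (gact smult Ag t (tinv s) a) = a"
   "s \<in> Tor t \<Longrightarrow> gact smult Ag t (tinv s) (gact smult Ag t s a) = a"
  by (simp_all add: g_comp tmul_inv tmul_inv' g_one)

lemma g_Aut:
  assumes s: "s \<in> Tor t"
  shows "gact smult Ag t s \<in> Aut smult"
  unfolding Aut_def alg_aut_def
proof (intro CollectI conjI allI)
  let ?g = "gact smult Ag t s"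
  show b: "bij ?g"
    by (rule o_bij[of "gact smult Ag t (tinv s)"]) (auto simp: fun_eq_iff g_inv[OF s])
  show "Vector_Spaces.linear smult smult ?g"
    unfolding Vector_Spaces.linear_iff using A.vector_space_axioms by (simp add: g_add g_scale)
  show m: "?g (x * y) = ?g x * ?g y" for x y by (rule g_mult[OF s])
  obtain y where y: "?g y = 1" using b by (metis bij_pointE)
  have "?g 1 * ?g y = ?g y" using m[of 1 y] by simp
  then show "?g 1 = 1" using y by simp
qed

lemma g_coeff_laurent:
  assumes lam: "lin_functional smult lam"
  shows "laurent_fun t (\<lambda>s. lam (gact smult Ag t s v))"
proof -
  obtain N d where a: "rep_ok Ag t v N d" using rep_exists by blast
  have mh: "module_hom smult (*) lam" using lam unfolding lin_functional_def by (simp add: module_hom_iff_linear)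
  show ?thesis
  proof (rule laurent_gen[of N id t _ "\<lambda>n. lam (d n)"])
    show "finite N" "id ` N \<subseteq> Zvec t" using a unfolding rep_ok_def by auto
    show "\<forall>s\<in>Tor t. lam (gact smult Ag t s v) = (\<Sum>n\<in>N. lam (d n) * chr t (id n) s)"
      unfolding g_rep[OF a] by (simp add: module_hom.sum[OF mh] module_hom.scale[OF mh] mult.commute)
  qed
qed

lemma g_regV: "regV smult V q \<Longrightarrow> laurent_fun t (\<lambda>s. q (restrict (gact smult Ag t s) V))"
proof (rule laurent_regV)
  fix v lam assume v: "v \<in> V" and lam: "lin_functional smult lam"
  show "laurent_fun t (\<lambda>s. lam (gact smult Ag t s v))" using g_coeff_laurent[OF lam] .
  then have "laurent_fun t (\<lambda>s. lam (gact smult Ag t (tinv s) v))" by (rule laurent_inv)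
  then show "laurent_fun t (\<lambda>s. lam (inv_into V (restrict (gact smult Ag t s) V) v))"
  proof (rule laurent_cong)
    fix s :: "nat \<Rightarrow> 'k" assume s: "s \<in> Tor t"
    have "inv_into V (restrict (gact smult Ag t s) V) v = gact smult Ag t (tinv s) v"
      by (rule inv_into_restrict[where g="gact smult Ag t (tinv s)", OF Aut_props(7)[OF g_Aut[OF s]] v
            V_inv[OF g_Aut[OF Tor_inv[OF s]] v] g_inv(1)[OF s]])
    then show "lam (gact smult Ag t (tinv s) v) = lam (inv_into V (restrict (gact smult Ag t s) V) v)" by simp
  qed
qed

end

lemma powi_shift:
  fixes a :: "'k::field"
  assumes "a \<noteq> 0" "nat (- m) \<le> N"
  shows "a powi m * a ^ N = a ^ nat (m + int N)"
proof -
  have "a powi m * a ^ N = a powi m * a powi (int N)" by simp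
  also have "\<dots> = a powi (m + int N)" using assms(1) by (simp add: power_int_add)
  also have "m + int N = int (nat (m + int N))" using assms(2) by simp
  also have "a powi int (nat (m + int N)) = a ^ nat (m + int N)" by (rule power_int_of_nat)
  finally show ?thesis .
qed

lemma curve_good:
  fixes s :: "nat \<Rightarrow> 'k::field_char_0" and L :: "(nat \<Rightarrow> 'k) \<Rightarrow> 'k"
  assumes "laurent_fun n L"
  shows "\<exists>P N. \<forall>x. poly (\<Prod>j<n. [:1, s j - 1:]) x \<noteq> 0 \<longrightarrow>
     L (\<lambda>j. if j < n then poly [:1, s j - 1:] x else 1) * poly (\<Prod>j<n. [:1, s j - 1:]) x ^ N = poly P x"
proof -
  define q where "q j = [:1, s j - 1:]" for j
  define Q where "Q = (\<Prod>j<n. q j)"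
  define \<gamma> where "\<gamma> x = (\<lambda>j. if j < n then poly (q j) x else 1)" for x
  obtain M c where M: "finite M" "M \<subseteq> Zvec n" "\<forall>s\<in>Tor n. L s = (\<Sum>m\<in>M. c m * chr n m s)"
    using assms unfolding laurent_fun_def by blast
  define N where "N = (\<Sum>m\<in>M. \<Sum>j<n. nat (- m j))"
  have Nb: "nat (- m j) \<le> N" if "m \<in> M" "j < n" for m j
  proof -
    have "nat (- m j) \<le> (\<Sum>j<n. nat (- m j))" using that by (intro member_le_sum) auto
    also have "\<dots> \<le> N" unfolding N_def using that M(1) by (intro member_le_sum) auto
    finally show ?thesis .
  qed
  define P where "P = (\<Sum>m\<in>M. Polynomial.smult (c m) (\<Prod>j<n. q j ^ nat (m j + int N)))"
  have "L (\<gamma> x) * poly Q x ^ N = poly P x" if x: "poly Q x \<noteq> 0" for x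
  proof -
    have nz: "poly (q j) x \<noteq> 0" if "j < n" for j
      using x that by (auto simp: Q_def poly_prod)
    have tor: "\<gamma> x \<in> Tor n" using nz by (auto simp: Tor_def \<gamma>_def)
    have mono: "chr n m (\<gamma> x) * poly Q x ^ N = poly (\<Prod>j<n. q j ^ nat (m j + int N)) x" if m: "m \<in> M" for m
    proof -
      have "chr n m (\<gamma> x) * poly Q x ^ N = (\<Prod>j<n. poly (q j) x powi m j) * (\<Prod>j<n. poly (q j) x ^ N)"
        unfolding chr_def Q_def poly_prod prod_power_distrib
        by (simp add: \<gamma>_def)
      also have "\<dots> = (\<Prod>j<n. poly (q j) x powi m j * poly (q j) x ^ N)"
        by (simp add: prod.distrib)
      also have "\<dots> = (\<Prod>j<n. poly (q j) x ^ nat (m j + int N))"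
        by (rule prod.cong) (auto intro!: powi_shift nz Nb m)
      also have "\<dots> = poly (\<Prod>j<n. q j ^ nat (m j + int N)) x"
        by (simp add: poly_prod)
      finally show ?thesis .
    qed
    have "L (\<gamma> x) * poly Q x ^ N = (\<Sum>m\<in>M. c m * (chr n m (\<gamma> x) * poly Q x ^ N))"
      using M(3) tor by (simp add: sum_distrib_right mult.assoc)
    also have "\<dots> = poly P x"
      unfolding P_def poly_sum by (rule sum.cong) (simp_all add: mono)
    finally show ?thesis .
  qed
  then show ?thesis unfolding Q_def q_def \<gamma>_def by blast
qed

context setting begin

lemma g_fun_one: "gact smult Ag t tone = id"
  by (rule ext) (simp add: g_one)

lemma g_AutV0:
  assumes s: "s \<in> Tor t"
  shows "restrict (gact smult Ag t s) V \<in> AutV0 smult V"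
proof -
  define Q where "Q = (\<Prod>j<t. [:1, s j - 1:])"
  define \<gamma> where "\<gamma> x = (\<lambda>j. if j < t then poly [:1, s j - 1:] x else (1::'k))" for x
  define \<Lambda> where "\<Lambda> = {x. poly Q x \<noteq> 0}"
  define R where "R x = restrict (gact smult Ag t (\<gamma> x)) V" for x
  have polyQ: "poly Q x = (\<Prod>j<t. 1 + x * (s j - 1))" for x
    by (simp add: Q_def poly_prod)
  have \<gamma>T: "\<gamma> x \<in> Tor t" if "x \<in> \<Lambda>" for x
    using that by (auto simp: \<Lambda>_def Tor_def \<gamma>_def polyQ)
  have \<gamma>0: "\<gamma> 0 = tone" by (auto simp: \<gamma>_def tone_def)
  have \<gamma>1: "\<gamma> 1 = s" using s by (auto simp: \<gamma>_def Tor_def fun_eq_iff)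
  have "poly Q 0 = 1" by (simp add: polyQ)
  then have Q0: "0 \<in> \<Lambda>" "Q \<noteq> 0" by (auto simp: \<Lambda>_def)
  have Q1: "1 \<in> \<Lambda>" using s by (auto simp: \<Lambda>_def polyQ Tor_def)
  have inf: "infinite \<Lambda>"
  proof
    assume "finite \<Lambda>"
    moreover have "finite {x. poly Q x = 0}" using Q0(2) by (rule poly_roots_finite)
    ultimately have "finite (\<Lambda> \<union> {x. poly Q x = 0})" by simp
    moreover have "\<Lambda> \<union> {x. poly Q x = 0} = UNIV" by (auto simp: \<Lambda>_def)
    ultimately show False using infinite_UNIV_char_0 by metis
  qed
  define S where "S = R ` \<Lambda>"
  have SA: "S \<subseteq> AutV smult V"
    unfolding S_def R_def AutV_def using g_Aut \<gamma>T by blast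
  have Sid: "restrict id V \<in> S"
    unfolding S_def R_def using Q0(1) \<gamma>0 g_fun_one by (metis image_eqI)
  have Ss: "restrict (gact smult Ag t s) V \<in> S"
    unfolding S_def R_def using Q1 \<gamma>1 by (metis image_eqI)
  have conn: "zariski_connected smult V S"
    unfolding zariski_connected_def
  proof (intro notI, elim exE conjE)
    fix C1 C2
    assume c1: "zariski_closed smult V C1" and c2: "zariski_closed smult V C2"
      and cov: "S \<subseteq> C1 \<union> C2" and ne1: "S \<inter> C1 \<noteq> {}" and ne2: "S \<inter> C2 \<noteq> {}"
      and dis: "S \<inter> C1 \<inter> C2 = {}"
    obtain P1 where P1: "\<forall>p\<in>P1. polyV smult V p" "C1 = {g \<in> GLV smult V. \<forall>p\<in>P1. p g = 0}"
      using c1 unfolding zariski_closed_def by blast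
    obtain P2 where P2: "\<forall>p\<in>P2. polyV smult V p" "C2 = {g \<in> GLV smult V. \<forall>p\<in>P2. p g = 0}"
      using c2 unfolding zariski_closed_def by blast
    obtain x1 where x1: "x1 \<in> \<Lambda>" "R x1 \<in> C1" using ne1 unfolding S_def by blast
    have "R x1 \<notin> C2" using dis x1 unfolding S_def by blast
    then obtain p2 where p2: "p2 \<in> P2" "p2 (R x1) \<noteq> 0" using x1(2) P1(2) P2(2) by blast
    obtain x2 where x2: "x2 \<in> \<Lambda>" "R x2 \<in> C2" using ne2 unfolding S_def by blast
    have "R x2 \<notin> C1" using dis x2 unfolding S_def by blast
    then obtain p1 where p1: "p1 \<in> P1" "p1 (R x2) \<noteq> 0" using x2(2) P1(2) P2(2) by blast
    have L1: "laurent_fun t (\<lambda>u. p1 (restrict (gact smult Ag t u) V))"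
      using g_regV polyV_regV P1(1) p1(1) by blast
    have L2: "laurent_fun t (\<lambda>u. p2 (restrict (gact smult Ag t u) V))"
      using g_regV polyV_regV P2(1) p2(1) by blast
    obtain F1 N1 where F1: "\<forall>x. poly Q x \<noteq> 0 \<longrightarrow> p1 (R x) * poly Q x ^ N1 = poly F1 x"
      using curve_good[OF L1, of s] unfolding Q_def[symmetric] \<gamma>_def[symmetric] R_def by blast
    obtain F2 N2 where F2: "\<forall>x. poly Q x \<noteq> 0 \<longrightarrow> p2 (R x) * poly Q x ^ N2 = poly F2 x"
      using curve_good[OF L2, of s] unfolding Q_def[symmetric] \<gamma>_def[symmetric] R_def by blast
    have "\<Lambda> \<subseteq> {x. poly (F1 * F2) x = 0}"
    proof
      fix x assume x: "x \<in> \<Lambda>"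
      then have "R x \<in> C1 \<union> C2" using cov unfolding S_def by blast
      then have "p1 (R x) = 0 \<or> p2 (R x) = 0" using p1(1) p2(1) P1(2) P2(2) by blast
      then have "poly F1 x = 0 \<or> poly F2 x = 0" using F1 F2 x unfolding \<Lambda>_def by auto
      then show "x \<in> {x. poly (F1 * F2) x = 0}" by auto
    qed
    then have "F1 * F2 = 0" using inf poly_roots_finite finite_subset by blast
    then have "F1 = 0 \<or> F2 = 0" by simp
    then show False
    proof
      assume "F1 = 0"
      then have "p1 (R x2) * poly Q x2 ^ N1 = 0" using F1 x2(1) unfolding \<Lambda>_def by auto
      then show False using p1(2) x2(1) unfolding \<Lambda>_def by simp
    next
      assume "F2 = 0"
      then have "p2 (R x1) * poly Q x1 ^ N2 = 0" using F2 x1(1) unfolding \<Lambda>_def by auto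
      then show False using p2(2) x1(1) unfolding \<Lambda>_def by simp
    qed
  qed
  show ?thesis unfolding AutV0_def using SA Sid Ss conn by blast
qed

lemma g_Aut0: "s \<in> Tor t \<Longrightarrow> gact smult Ag t s \<in> Aut0 smult V"
  unfolding Aut0_def using g_Aut g_AutV0 by blast

end

context setting begin

lemma tau_inj: "inj_on tau (Tor r)"
  using tor unfolding torus_iso_def bij_betw_def by blast

lemma tau_image: "tau ` Tor r = Aut0 smult V"
  using tor unfolding torus_iso_def bij_betw_def by blast

definition psi :: "(nat \<Rightarrow> 'k) \<Rightarrow> nat \<Rightarrow> 'k" where
  "psi s = inv_into (Tor r) tau (gact smult Ag t s)"

lemma psi_props: "s \<in> Tor t \<Longrightarrow> psi s \<in> Tor r" "s \<in> Tor t \<Longrightarrow> tau (psi s) = gact smult Ag t s"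
  unfolding psi_def using g_Aut0 tau_image by (metis inv_into_into, metis f_inv_into_f)

lemma psi_mul:
  assumes s: "s \<in> Tor t" and u: "u \<in> Tor t"
  shows "psi (tmul s u) = tmul (psi s) (psi u)"
proof (rule inj_onD[OF tau_inj])
  have "tau (psi (tmul s u)) = gact smult Ag t (tmul s u)" using psi_props(2)[OF Tor_mul[OF s u]] .
  also have "\<dots> = gact smult Ag t s \<circ> gact smult Ag t u" by (rule ext) (simp add: g_comp)
  also have "\<dots> = tau (psi s) \<circ> tau (psi u)" using psi_props(2) s u by simp
  also have "\<dots> = tau (tmul (psi s) (psi u))" using tau_mul psi_props(1) s u by simp
  finally show "tau (psi (tmul s u)) = tau (tmul (psi s) (psi u))" .
  show "psi (tmul s u) \<in> Tor r" using psi_props(1)[OF Tor_mul[OF s u]] .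
  show "tmul (psi s) (psi u) \<in> Tor r" using Tor_mul psi_props(1) s u by blast
qed

lemma psi_one: "psi tone = tone"
proof (rule inj_onD[OF tau_inj])
  show "tau (psi tone) = tau tone" using psi_props(2)[OF Tor_one] g_fun_one tau_one by simp
  show "psi tone \<in> Tor r" using psi_props(1)[OF Tor_one] .
  show "tone \<in> Tor r" by (rule Tor_one)
qed

lemma psi_mono: "i < r \<Longrightarrow> \<exists>phi\<in>Zvec t. \<forall>s\<in>Tor t. psi s i = chr t phi s"
proof -
  assume i: "i < r"
  obtain q where q: "regV smult V q" "\<forall>u\<in>Tor r. u i = q (restrict (tau u) V)"
    using tor i unfolding torus_iso_def by blast
  show ?thesis
  proof (rule monomial_lemma)
    show "laurent_fun t (\<lambda>s. psi s i)"
    proof (rule laurent_cong[OF g_regV[OF q(1)]])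
      fix s :: "nat \<Rightarrow> 'k" assume s: "s \<in> Tor t"
      show "q (restrict (gact smult Ag t s) V) = psi s i"
      proof -
        have "psi s i = q (restrict (tau (psi s)) V)" using q(2) psi_props(1)[OF s] by blast
        then show ?thesis using psi_props(2)[OF s] by simp
      qed
    qed
    show "\<forall>s\<in>Tor t. \<forall>u\<in>Tor t. psi (tmul s u) i = psi s i * psi u i"
      using psi_mul by (simp add: tmul_def)
    show "psi tone i = 1" using psi_one by (simp add: tone_def)
  qed
qed

lemma eigen_in_Ag:
  assumes n: "n \<in> Zvec t" and e: "\<forall>s\<in>Tor t. gact smult Ag t s a = smult (chr t n s) a"
  shows "a \<in> Ag n"
proof -
  obtain N d where a: "rep_ok Ag t a N d" using rep_exists by blast
  have fin: "finite (insert n N)" "insert n N \<subseteq> Zvec t" using a n unfolding rep_ok_def by auto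
  have "ext N d n - (if n = n then a else 0) = 0"
  proof (rule dedekindA[OF fin, where w = "\<lambda>k. ext N d k - (if k = n then a else 0)"])
    show "n \<in> insert n N" by simp
    show "\<forall>s\<in>Tor t. (\<Sum>k\<in>insert n N. smult (chr t k s) (ext N d k - (if k = n then a else 0))) = 0"
    proof
      fix s :: "nat \<Rightarrow> 'k" assume s: "s \<in> Tor t"
      have "(\<Sum>k\<in>insert n N. smult (chr t k s) (ext N d k - (if k = n then a else 0))) =
            (\<Sum>k\<in>insert n N. smult (chr t k s) (ext N d k)) - (\<Sum>k\<in>insert n N. if k = n then smult (chr t k s) a else 0)"
        by (subst sum_subtractf[symmetric]) (rule sum.cong, auto simp: A.scale_right_diff_distrib)
      also have "(\<Sum>k\<in>insert n N. smult (chr t k s) (ext N d k)) = gact smult Ag t s a"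
        unfolding g_rep[OF a] by (rule ext_sum[OF fin(1)]) auto
      also have "(\<Sum>k\<in>insert n N. if k = n then smult (chr t k s) a else 0) = smult (chr t n s) a"
        using fin(1) by (simp add: sum.delta)
      finally show "(\<Sum>k\<in>insert n N. smult (chr t k s) (ext N d k - (if k = n then a else 0))) = 0"
        using e s by simp
    qed
  qed
  then have "a = ext N d n" by simp
  moreover have "ext N d n \<in> Ag n" using a A.subspace_0[OF gsub[OF n]] unfolding rep_ok_def ext_def by auto
  ultimately show ?thesis by simp
qed

lemma grad_unique:
  assumes K: "finite K" "K \<subseteq> Zvec t" "\<forall>k\<in>K. b k \<in> Ag k" and n: "n \<in> Zvec t" "a \<in> Ag n"
    and sum: "(\<Sum>k\<in>K. b k) = a"
  shows "ext K b n = a"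
proof -
  have "\<forall>k\<in>insert n K. ext K b k - (if k = n then a else 0) = 0"
  proof (rule gdirect)
    show "finite (insert n K)" "insert n K \<subseteq> Zvec t" using K n by auto
    show "\<forall>k\<in>insert n K. ext K b k - (if k = n then a else 0) \<in> Ag k"
    proof
      fix k assume k: "k \<in> insert n K"
      then have sub: "A.subspace (Ag k)" using K n gsub by blast
      have "ext K b k \<in> Ag k" "(if k = n then a else 0) \<in> Ag k"
        using K n A.subspace_0[OF sub] unfolding ext_def by auto
      then show "ext K b k - (if k = n then a else 0) \<in> Ag k" using A.subspace_diff[OF sub] by blast
    qed
    show "(\<Sum>k\<in>insert n K. ext K b k - (if k = n then a else 0)) = 0"
      using K(1) sum ext_sum'[of "insert n K" K b] by (simp add: sum_subtractf sum.delta subset_insertI)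
  qed
  then show ?thesis by simp
qed

lemma main: "\<exists>phi. group_hom_Z r t phi \<and>
           (\<forall>n\<in>Zvec t. is_direct_sum smult (Ag n) (canon_comp smult r tau) {m \<in> Zvec r. phi m = n})"
proof -
  have "\<forall>i. \<exists>ph. i < r \<longrightarrow> ph \<in> Zvec t \<and> (\<forall>s\<in>Tor t. psi s i = chr t ph s)"
    using psi_mono by blast
  then obtain Phi where Phi: "\<And>i. i < r \<Longrightarrow> Phi i \<in> Zvec t \<and> (\<forall>s\<in>Tor t. psi s i = chr t (Phi i) s)"
    by metis
  define phi where "phi m = (\<lambda>j. \<Sum>i<r. m i * Phi i j)" for m :: "nat \<Rightarrow> int"
  have phiZ: "phi m \<in> Zvec t" for m
    unfolding phi_def Zvec_def using Phi unfolding Zvec_def by auto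
  have hom: "group_hom_Z r t phi"
    unfolding group_hom_Z_def using phiZ by (auto simp: phi_def distrib_right sum.distrib)
  have chr_phi: "chr r m (psi s) = chr t (phi m) s" if s: "s \<in> Tor t" for m s
  proof -
    have "chr r m (psi s) = (\<Prod>i<r. (\<Prod>j<t. s j powi Phi i j) powi m i)"
      unfolding chr_def using Phi s by (intro prod.cong) (auto simp: chr_def)
    also have "\<dots> = (\<Prod>i<r. \<Prod>j<t. s j powi (m i * Phi i j))"
      by (simp add: powi_prod power_int_mult[symmetric] mult.commute)
    also have "\<dots> = (\<Prod>j<t. \<Prod>i<r. s j powi (m i * Phi i j))" by (rule prod.swap)
    also have "\<dots> = (\<Prod>j<t. s j powi (\<Sum>i<r. m i * Phi i j))"
      using s by (intro prod.cong refl powi_sum[symmetric]) (auto simp: Tor_def)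
    also have "\<dots> = chr t (phi m) s" by (simp add: chr_def phi_def)
    finally show ?thesis .
  qed
  have cinA: "a \<in> Ag (phi m)" if m: "m \<in> Zvec r" and a: "a \<in> canon_comp smult r tau m" for a m
  proof (rule eigen_in_Ag[OF phiZ], intro ballI)
    fix s :: "nat \<Rightarrow> 'k" assume s: "s \<in> Tor t"
    have "gact smult Ag t s a = tau (psi s) a" using psi_props(2)[OF s] by simp
    also have "\<dots> = smult (chr r m (psi s)) a" using a psi_props(1)[OF s] by (auto simp: canon_comp_def)
    finally show "gact smult Ag t s a = smult (chr t (phi m) s) a" using chr_phi[OF s] by simp
  qed
  have ds: "is_direct_sum smult (Ag n) (canon_comp smult r tau) {m \<in> Zvec r. phi m = n}"
    if n: "n \<in> Zvec t" for n
    unfolding is_direct_sum_def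
  proof (intro conjI allI impI)
    let ?I = "{m \<in> Zvec r. phi m = n}"
    show "Ag n = A.span (\<Union>m\<in>?I. canon_comp smult r tau m)"
    proof
      show "A.span (\<Union>m\<in>?I. canon_comp smult r tau m) \<subseteq> Ag n"
        by (rule A.span_minimal[OF _ gsub[OF n]]) (use cinA in auto)
      show "Ag n \<subseteq> A.span (\<Union>m\<in>?I. canon_comp smult r tau m)"
      proof
        fix a assume a: "a \<in> Ag n"
        obtain J x where J: "finite J" "J \<subseteq> Zvec r" "\<forall>i\<in>J. x i \<in> canon_comp smult r tau i"
          "a = (\<Sum>i\<in>J. x i)"
          using A.span_union_sums[of "Zvec r" "canon_comp smult r tau" a] canon_subspace canon_span
          by blast
        define b where "b k = (\<Sum>m\<in>{m\<in>J. phi m = k}. x m)" for k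
        have bA: "\<forall>k\<in>phi ` J. b k \<in> Ag k"
        proof
          fix k assume k: "k \<in> phi ` J"
          then obtain m0 where m0: "m0 \<in> J" "k = phi m0" by blast
          show "b k \<in> Ag k" unfolding b_def m0(2)
          proof (rule A.subspace_sum[OF gsub[OF phiZ]])
            fix m assume "m \<in> {m \<in> J. phi m = phi m0}"
            then show "x m \<in> Ag (phi m0)" using J cinA by (metis (mono_tags, lifting) mem_Collect_eq subsetD)
          qed
        qed
        have "(\<Sum>k\<in>phi ` J. b k) = a"
          unfolding b_def J(4) by (rule sum.image_gen[OF J(1), symmetric])
        moreover have sub: "phi ` J \<subseteq> Zvec t" using phiZ by auto
        ultimately have e: "ext (phi ` J) b n = a"
          using grad_unique[OF finite_imageI[OF J(1)] sub bA n a] by blast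
        show "a \<in> A.span (\<Union>m\<in>?I. canon_comp smult r tau m)"
        proof (cases "n \<in> phi ` J")
          case True
          then have "a = b n" using e by (simp add: ext_def)
          also have "b n \<in> A.span (\<Union>m\<in>?I. canon_comp smult r tau m)"
            unfolding b_def using J by (intro A.span_sum A.span_base) auto
          finally show ?thesis .
        next
          case False
          then have "a = 0" using e by (simp add: ext_def)
          then show ?thesis by (simp add: A.span_zero)
        qed
      qed
    qed
  next
    fix J x
    assume "finite J" "J \<subseteq> {m \<in> Zvec r. phi m = n}"
      "\<forall>i\<in>J. x i \<in> canon_comp smult r tau i" "(\<Sum>i\<in>J. x i) = 0"
    then show "\<forall>i\<in>J. x i = 0" using canon_indep[of J x] by blast
  qed
  show ?thesis using hom ds by blast
qed

end

theorem theorem2p2: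
  fixes smult :: "'k::field_char_0 \<Rightarrow> 'a::ring_1 \<Rightarrow> 'a"
    and V :: "'a set" and r t :: nat
    and tau :: "(nat \<Rightarrow> 'k) \<Rightarrow> ('a \<Rightarrow> 'a)"
    and Ag :: "(nat \<Rightarrow> int) \<Rightarrow> 'a set"
  assumes "is_algebra smult"
    and "few_aut_V smult V"
    and "torus_iso smult V r tau"
    and "is_grading smult t Ag"
  shows "\<exists>phi. group_hom_Z r t phi \<and>
           (\<forall>n\<in>Zvec t. is_direct_sum smult (Ag n) (canon_comp smult r tau)
                          {m \<in> Zvec r. phi m = n})"
proof -
  interpret setting smult V r t tau Ag using assms by unfold_locales
  show ?thesis by (rule main)
qed

end
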